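(* Let $n\ge1$ and let $c_0,\dots,c_{n-1}$ be mutually distinct complex numbers with $|c_j|=1$. Suppose there exist nonzero real numbers $x_0,\dots,x_{n-1}$ such that $$\sum_{j=0}^{n-1}c_j^kx_j=\delta_{k0},\qquad k=0,1,\dots,n-1 .$$ Then $x_j=1/n$ for all $j$, and, after a suitable reordering of $c_1,\dots,c_{n-1}$, $c_j=c_0e^{2\pi ij/n}$ for $j=0,1,\dots,n-1$.
   Context: $\delta_{k0}$ denotes the Kronecker delta. *)

theory Defs
  imports "HOL-Analysis.Analysis"
begin

end

theory Submission
  imports Defs "HOL-Computational_Algebra.Polynomial" "HOL-Combinatorics.Permutations"
begin

theorem lemma2:
  fixes n :: nat and c :: "nat \<Rightarrow> complex" and x :: "nat \<Rightarrow> real"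
  assumes "n \<ge> 1"
    and "inj_on c {..<n}"
    and "\<And>j. j < n \<Longrightarrow> norm (c j) = 1"
    and "\<And>j. j < n \<Longrightarrow> x j \<noteq> 0"
    and "\<And>k. k < n \<Longrightarrow>
           (\<Sum>j<n. c j ^ k * complex_of_real (x j)) = (if k = 0 then 1 else 0)"
  shows "(\<forall>j<n. x j = 1 / real n) \<and>
         (\<exists>\<sigma>. \<sigma> permutes {1..<n} \<and>
            (\<forall>j<n. c (\<sigma> j) = c 0 * exp (2 * complex_of_real pi * \<i> * of_nat j / of_nat n)))"
proof -
  note n1 = assms(1) and inj = assms(2) and nc = assms(3) and S = assms(5)
  have cc: "c j * cnj (c j) = 1" if "j < n" for j
    using complex_norm_square[of "c j"] nc[OF that] by simp
  have c0: "c j \<noteq> 0" if "j < n" for j using nc[OF that] by auto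
  have Sc: "(\<Sum>j<n. cnj (c j) ^ k * complex_of_real (x j)) = 0" if "1 \<le> k" "k < n" for k
  proof -
    have "(\<Sum>j<n. cnj (c j) ^ k * complex_of_real (x j)) = cnj (\<Sum>j<n. c j ^ k * complex_of_real (x j))"
      by simp
    also have "\<dots> = 0" using S[OF that(2)] that by simp
    finally show ?thesis .
  qed
  have S2: "(\<Sum>j<n. c j ^ i * cnj (c j) ^ s * complex_of_real (x j)) = (if i = s then 1 else 0)"
    if "i \<le> n" "1 \<le> s" "s < n" for i s
  proof (cases "s \<le> i")
    case True
    have "c j ^ i * cnj (c j) ^ s = c j ^ (i - s)" if "j < n" for j
    proof -
      obtain d where d: "i = s + d" using True le_Suc_ex by blast
      have "c j ^ i * cnj (c j) ^ s = c j ^ (i - s) * (c j * cnj (c j)) ^ s"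
        unfolding d by (simp add: power_mult_distrib power_add mult_ac)
      then show ?thesis using cc[OF that] by simp
    qed
    then have "(\<Sum>j<n. c j ^ i * cnj (c j) ^ s * complex_of_real (x j)) =
        (\<Sum>j<n. c j ^ (i - s) * complex_of_real (x j))" by (intro sum.cong) auto
    also have "\<dots> = (if i = s then 1 else 0)" using S[of "i - s"] True that by auto
    finally show ?thesis .
  next
    case False
    have "c j ^ i * cnj (c j) ^ s = cnj (c j) ^ (s - i)" if "j < n" for j
    proof -
      obtain d where d: "s = i + d" using False le_Suc_ex nat_le_linear by blast
      have "c j ^ i * cnj (c j) ^ s = cnj (c j) ^ (s - i) * (c j * cnj (c j)) ^ i"
        unfolding d by (simp add: power_mult_distrib power_add mult_ac)
      then show ?thesis using cc[OF that] by simp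
    qed
    then have "(\<Sum>j<n. c j ^ i * cnj (c j) ^ s * complex_of_real (x j)) =
        (\<Sum>j<n. cnj (c j) ^ (s - i) * complex_of_real (x j))" by (intro sum.cong) auto
    also have "\<dots> = 0" using Sc[of "s - i"] False that by auto
    finally show ?thesis using False by simp
  qed
  define p where "p = (\<Prod>j<n. [:- c j, 1:])"
  have degp: "degree p = n" unfolding p_def
    by (subst degree_prod_eq_sum_degree) auto
  have lp: "coeff p n = 1" using lead_coeff_prod[of "\<lambda>j. [:- c j, 1:]" "{..<n}"] degp
    unfolding p_def by simp
  have rootp: "poly p (c j) = 0" if "j < n" for j
    unfolding p_def poly_prod using that by (intro prod_zero) auto
  have pa: "poly p z = (\<Sum>i\<le>n. coeff p i * z ^ i)" for z
    using poly_altdef[of p z] degp by simp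
  have cs: "coeff p s = 0" if "1 \<le> s" "s < n" for s
  proof -
    have "0 = (\<Sum>j<n. cnj (c j) ^ s * complex_of_real (x j) * poly p (c j))"
      using rootp by simp
    also have "\<dots> = (\<Sum>j<n. \<Sum>i\<le>n. coeff p i * (c j ^ i * cnj (c j) ^ s * complex_of_real (x j)))"
      unfolding pa by (simp add: sum_distrib_left mult_ac)
    also have "\<dots> = (\<Sum>i\<le>n. coeff p i * (\<Sum>j<n. c j ^ i * cnj (c j) ^ s * complex_of_real (x j)))"
      by (subst sum.swap) (simp add: sum_distrib_left)
    also have "\<dots> = (\<Sum>i\<le>n. coeff p i * (if i = s then 1 else 0))"
      using S2 that by (intro sum.cong) auto
    also have "\<dots> = coeff p s" using that by (simp add: if_distrib cong: if_cong)
    finally show ?thesis by simp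
  qed
  have pz: "poly p z = coeff p 0 + z ^ n" for z
  proof -
    have "poly p z = (\<Sum>i\<le>n. (if i = 0 then coeff p 0 else 0) + (if i = n then z ^ n else 0))"
      unfolding pa using cs lp n1 by (intro sum.cong) auto
    also have "\<dots> = coeff p 0 + z ^ n" by (simp add: sum.distrib)
    finally show ?thesis .
  qed
  have cn: "c j ^ n = c 0 ^ n" if "j < n" for j
    using rootp[OF that] rootp[of 0] n1 pz by (simp add: add_eq_0_iff)
  define \<omega> where "\<omega> k = exp (2 * complex_of_real pi * \<i> * of_nat k / of_nat n)" for k
  have ex: "\<exists>k<n. c j = c 0 * \<omega> k" if "j < n" for j
  proof -
    have "(c j / c 0) ^ n = 1" using cn[OF that] c0[of 0] n1
      by (simp add: power_divide)
    then have "c j / c 0 \<in> {exp(2 * of_real pi * \<i> * of_nat j / of_nat n) | j. j < n}"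
      using complex_roots_unity[OF n1] by blast
    then obtain k where "k < n" "c j / c 0 = \<omega> k" unfolding \<omega>_def by auto
    then show ?thesis using c0[of 0] n1 by (auto simp: field_simps)
  qed
  define \<tau> where "\<tau> j = (SOME k. k < n \<and> c j = c 0 * \<omega> k)" for j
  have \<tau>: "\<tau> j < n \<and> c j = c 0 * \<omega> (\<tau> j)" if "j < n" for j
    unfolding \<tau>_def using someI_ex[OF ex[OF that]] .
  have \<tau>inj: "inj_on \<tau> {..<n}"
  proof (rule inj_onI)
    fix a b assume "a \<in> {..<n}" "b \<in> {..<n}" "\<tau> a = \<tau> b"
    then have "c a = c b" using \<tau>[of a] \<tau>[of b] \<open>a \<in> _\<close> \<open>b \<in> _\<close> by (metis lessThan_iff)
    then show "a = b" using inj \<open>a \<in> _\<close> \<open>b \<in> _\<close> by (auto dest: inj_onD)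
  qed
  have \<tau>im: "\<tau> ` {..<n} = {..<n}"
    using \<tau> \<tau>inj by (intro endo_inj_surj) auto
  have \<omega>inj: "\<omega> a = \<omega> b \<Longrightarrow> a < n \<Longrightarrow> b < n \<Longrightarrow> a = b" for a b
    unfolding \<omega>_def using complex_root_unity_eq[OF n1, of a b] by simp
  have \<tau>0: "\<tau> 0 = 0"
  proof -
    have "c 0 = c 0 * \<omega> (\<tau> 0)" using \<tau>[of 0] n1 by (metis less_le_trans zero_less_one)
    then have "\<omega> (\<tau> 0) = \<omega> 0" using c0[of 0] n1 by (simp add: \<omega>_def)
    moreover have "\<tau> 0 < n" using \<tau>[of 0] n1 by (metis less_le_trans zero_less_one)
    ultimately show ?thesis using \<omega>inj n1 by (metis less_le_trans zero_less_one)
  qed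
  define \<sigma> where "\<sigma> k = (if k < n then inv_into {..<n} \<tau> k else k)" for k
  have bij\<tau>: "bij_betw \<tau> {..<n} {..<n}" using \<tau>inj \<tau>im by (simp add: bij_betw_def)
  have bij: "bij_betw \<sigma> {..<n} {..<n}"
  proof -
    have "bij_betw (inv_into {..<n} \<tau>) {..<n} {..<n}" using bij_betw_inv_into[OF bij\<tau>] .
    then show ?thesis unfolding \<sigma>_def by (rule bij_betw_cong[THEN iffD1, rotated]) auto
  qed
  have perm: "\<sigma> permutes {..<n}" using bij by (rule bij_imp_permutes) (auto simp: \<sigma>_def)
  have \<sigma>0: "\<sigma> 0 = 0" using n1 \<tau>0 inv_into_f_f[OF \<tau>inj, of 0] by (auto simp: \<sigma>_def)
  have perm1: "\<sigma> permutes {1..<n}"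
    using perm by (rule permutes_superset) (use \<sigma>0 in \<open>auto simp: not_less_eq_eq\<close>)
  have \<tau>\<sigma>: "\<tau> (\<sigma> k) = k" if "k < n" for k
    using that \<tau>im f_inv_into_f[of k \<tau> "{..<n}"] by (auto simp: \<sigma>_def)
  have part2: "\<forall>j<n. c (\<sigma> j) = c 0 * \<omega> j"
  proof (intro allI impI)
    fix j assume "j < n"
    have "\<sigma> j < n" using bij \<open>j < n\<close> by (auto dest: bij_betwE)
    then show "c (\<sigma> j) = c 0 * \<omega> j" using \<tau>[OF \<open>\<sigma> j < n\<close>] \<tau>\<sigma>[OF \<open>j < n\<close>] by metis
  qed
  have part1: "x i = 1 / real n" if "i < n" for i
  proof -
    define q where "q z = (\<Sum>m<n. c i ^ (n - Suc m) * z ^ m)" for z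
    have qj: "q (c j) = 0" if "j < n" "j \<noteq> i" for j
    proof -
      have "(c j - c i) * q (c j) = c j ^ n - c i ^ n"
        unfolding q_def using power_diff_sumr2[of "c j" n "c i"] by simp
      also have "\<dots> = 0" by (simp only: cn[OF that(1)] cn[OF \<open>i < n\<close>]) simp
      finally show ?thesis using inj that \<open>i < n\<close> by (auto dest: inj_onD)
    qed
    have qi: "q (c i) = of_nat n * c i ^ (n - 1)"
    proof -
      have "q (c i) = (\<Sum>m<n. c i ^ (n - 1))"
        unfolding q_def
      proof (intro sum.cong refl)
        fix m assume "m \<in> {..<n}"
        have "c i ^ (n - Suc m) * c i ^ m = c i ^ (n - Suc m + m)" by (simp add: power_add)
        also have "n - Suc m + m = n - 1" using \<open>m \<in> {..<n}\<close> by auto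
        finally show "c i ^ (n - Suc m) * c i ^ m = c i ^ (n - 1)" .
      qed
      then show ?thesis by simp
    qed
    have "(\<Sum>j<n. complex_of_real (x j) * q (c j)) = (\<Sum>m<n. c i ^ (n - Suc m) * (\<Sum>j<n. c j ^ m * complex_of_real (x j)))"
      unfolding q_def sum_distrib_left
      by (subst sum.swap) (simp add: mult_ac)
    also have "\<dots> = (\<Sum>m<n. c i ^ (n - Suc m) * (if m = 0 then 1 else 0))"
      using S by (intro sum.cong) auto
    also have "\<dots> = c i ^ (n - 1)" using n1 by (simp add: if_distrib cong: if_cong)
    finally have e1: "(\<Sum>j<n. complex_of_real (x j) * q (c j)) = c i ^ (n - 1)" .
    have "(\<Sum>j<n. complex_of_real (x j) * q (c j)) = (\<Sum>j<n. if j = i then complex_of_real (x i) * q (c i) else 0)"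
      using qj by (intro sum.cong) auto
    also have "\<dots> = complex_of_real (x i) * q (c i)" using \<open>i < n\<close> by simp
    finally have "complex_of_real (x i) * (of_nat n * c i ^ (n - 1)) = c i ^ (n - 1)"
      using e1 qi by simp
    then have "complex_of_real (x i) * of_nat n = 1" using c0[OF \<open>i < n\<close>]
      by (metis mult.assoc mult_cancel_right2 power_not_zero)
    then have "x i * real n = 1" by (metis of_real_eq_1_iff of_real_mult of_real_of_nat_eq)
    then show ?thesis using n1 by (simp add: field_simps)
  qed
  show ?thesis using part1 perm1 part2 unfolding \<omega>_def by blast
qed

end
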